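(* Let $q$ be an odd prime power, $d$ a positive integer, $\varphi_d$ the coloring defined below, and $t\ge 2$ an integer. No affine subspace of $\mathbb{F}_q^d$ of dimension $t-2$ contains a $t$-falling star of $(\mathbb{F}_q^* )^d$ under $\varphi_d$. Consequently, $\mathrm{af}(S) \ge \mathrm{FS}(S) - 1$ for every nonempty finite subset $S \subseteq (\mathbb{F}_q^* )^d$.
   Context: $\mathbb{F}_q^*$ is the set of nonzero elements of $\mathbb{F}_q$, endowed with an arbitrary fixed linear order; $(\mathbb{F}_q^* )^d$ is ordered lexicographically with respect to it. Let $C_d = \mathrm{DOT} \sqcup \mathrm{ZERO}\sqcup\mathrm{UP}\sqcup\mathrm{DOWN}$, where $\mathrm{DOT} = \mathbb{F}_q^*$ and ZERO, UP, DOWN are three disjoint copies of $\{1,\dots,d\}\times \mathbb{F}_q$. For distinct $x<y$ in $(\mathbb{F}_q^* )^d$, let $i$ be the first coordinate where $x$ and $y$ differ, and $x\cdot y$ the standard dot product; $\varphi_d(x,y)=\varphi_d(y,x)$ is $(i,x_i+y_i)$ in ZERO if $x\cdot y=0$; $(i,x_i+y_i)$ in UP if $x\cdot y\ne 0$ and $x\cdot y=x\cdot x$; $(i,x_i+y_i)$ in DOWN if $x\cdot y\notin\{0,x\cdot x\}$ and $x\cdot y=y\cdot y$; and $x\cdot y\in\mathrm{DOT}$ otherwise. Distinct vectors $s_1,\dots,s_t$ form a $t$-falling star under $\varphi_d$ if there are colors $\alpha_2,\dots,\alpha_t$ with $\varphi_d(s_i,s_j)=\alpha_i$ for all $1\le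 j<i\le t$ (i.e., after some labeling, each vector's edges to all earlier vectors share one color). $\mathrm{FS}(S)$ is the maximum $t$ such that $S$ contains a $t$-falling star; $\mathrm{af}(S)$ is the dimension of the affine hull of $S$. *)

theory Defs
  imports Main
begin

text \<open>Vectors of F_q^d are lists of length d over a finite field 'a.
  Coordinates are indexed 0..d-1 (the paper uses 1..d).\<close>

definition dotp :: "'a::field list \<Rightarrow> 'a list \<Rightarrow> 'a" where
  "dotp x y = (\<Sum>i<length x. x ! i * y ! i)"

definition nzvecs :: "nat \<Rightarrow> 'a::field list set" where
  "nzvecs d = {x. length x = d \<and> (\<forall>i<d. x ! i \<noteq> 0)}"

definition elt_less :: "'a rel \<Rightarrow> 'a \<Rightarrow> 'a \<Rightarrow> bool" where
  "elt_less R a b \<longleftrightarrow> (a, b) \<in> R \<and> a \<noteq> b"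

definition first_diff :: "'a list \<Rightarrow> 'a list \<Rightarrow> nat" where
  "first_diff x y = (LEAST i. x ! i \<noteq> y ! i)"

definition lex_less :: "'a rel \<Rightarrow> 'a list \<Rightarrow> 'a list \<Rightarrow> bool" where
  "lex_less R x y \<longleftrightarrow> x \<noteq> y \<and> elt_less R (x ! first_diff x y) (y ! first_diff x y)"

datatype 'a color = DOT 'a | ZERO nat 'a | UP nat 'a | DOWN nat 'a

definition phi_ord :: "'a::field list \<Rightarrow> 'a list \<Rightarrow> 'a color" where
  "phi_ord x y =
     (let i = first_diff x y; s = x ! i + y ! i in
      if dotp x y = 0 then ZERO i s
      else if dotp x y = dotp x x then UP i s
      else if dotp x y = dotp y y then DOWN i s
      else DOT (dotp x y))"

definition phi :: "'a::field rel \<Rightarrow> 'a list \<Rightarrow> 'a list \<Rightarrow> 'a color" where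
  "phi R x y = (if lex_less R x y then phi_ord x y else phi_ord y x)"

text \<open>A list s of t distinct vectors is a t-falling star (for the labeling given
  by the list order) if each vector's edges to all earlier vectors share a colour.\<close>
definition falling_star :: "'a::field rel \<Rightarrow> 'a list list \<Rightarrow> bool" where
  "falling_star R s \<longleftrightarrow> distinct s \<and>
     (\<exists>\<alpha>. \<forall>i<length s. \<forall>j<i. phi R (s ! i) (s ! j) = \<alpha> i)"

definition FS :: "'a::field rel \<Rightarrow> 'a list set \<Rightarrow> nat" where
  "FS R S = Max {t. \<exists>s. falling_star R s \<and> set s \<subseteq> S \<and> length s = t}"

definition lin_indep :: "nat \<Rightarrow> 'a::field list list \<Rightarrow> bool" where
  "lin_indep d vs \<longleftrightarrow> (\<forall>c. (\<forall>i<d. (\<Sum>j<length vs. c j * vs ! j ! i) = 0)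
                               \<longrightarrow> (\<forall>j<length vs. c j = 0))"

definition affine_span_of :: "nat \<Rightarrow> 'a::field list \<Rightarrow> 'a list list \<Rightarrow> 'a list set" where
  "affine_span_of d p vs =
     {map (\<lambda>i. p ! i + (\<Sum>j<length vs. c j * vs ! j ! i)) [0..<d] | c. True}"

definition affine_subspace_dim :: "nat \<Rightarrow> nat \<Rightarrow> 'a::field list set \<Rightarrow> bool" where
  "affine_subspace_dim d k A \<longleftrightarrow>
     (\<exists>p vs. length p = d \<and> length vs = k \<and> (\<forall>v\<in>set vs. length v = d) \<and>
             lin_indep d vs \<and> A = affine_span_of d p vs)"

definition af :: "nat \<Rightarrow> 'a::field list set \<Rightarrow> nat" where
  "af d S = (LEAST k. \<exists>A. affine_subspace_dim d k A \<and> S \<subseteq> A)"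

end

theory Submission imports Defs Complex_Main "HOL-Library.Function_Algebras" begin
interpretation FV: vector_space "\<lambda>(c::'a::field) (f::nat\<Rightarrow>'a). \<lambda>i. c * f i"
  by unfold_locales (auto simp: algebra_simps fun_eq_iff)
lemma sum_fun_apply': "finite A \<Longrightarrow> (\<Sum>x\<in>A. (g x :: nat \<Rightarrow> 'b::comm_monoid_add)) l = (\<Sum>x\<in>A. g x l)"
  by (induction A rule: finite_induct) auto

lemma core:
  fixes w V :: "nat \<Rightarrow> nat \<Rightarrow> 'a::field" and n K d :: nat
  assumes H: "\<And>i. i<n \<Longrightarrow> \<exists>h. (\<forall>j<i. (\<Sum>l<d. h l * w j l) = 0) \<and> (\<Sum>l<d. h l * w i l) \<noteq> 0"
    and S: "\<And>i. i<n \<Longrightarrow> w i \<in> FV.span (V ` {..<K})"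
  shows "n \<le> K"
proof -
  have inj: "inj_on w {..<n}"
  proof (rule inj_onI)
    fix i j assume ij: "i \<in> {..<n}" "j \<in> {..<n}" "w i = w j"
    show "i = j"
    proof (rule ccontr)
      assume "i \<noteq> j"
      then consider "j < i" | "i < j" by linarith
      then show False
      proof cases
        case 1 then show False using H[of i] ij by auto
      next
        case 2 then show False using H[of j] ij by auto
      qed
    qed
  qed
  have ind: "FV.independent (w ` {..<n})"
  proof (rule FV.independent_if_scalars_zero)
    show "finite (w ` {..<n})" by simp
  next
    fix f x
    assume sum0: "(\<Sum>x\<in>w ` {..<n}. (\<lambda>i. f x * x i)) = 0" and x: "x \<in> w ` {..<n}"
    have pt: "(\<Sum>i'<n. f (w i') * w i' l) = 0" for l
    proof -
      have "(\<Sum>x\<in>w ` {..<n}. (\<lambda>i. f x * x i)) l = 0" using sum0 by simp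
      then have "(\<Sum>x\<in>w ` {..<n}. f x * x l) = 0" by (simp add: sum_fun_apply')
      then show ?thesis by (simp add: sum.reindex[OF inj])
    qed
    have all0: "\<forall>i<n. f (w i) = 0"
    proof (rule ccontr)
      assume "\<not> (\<forall>i<n. f (w i) = 0)"
      then have ne: "{i. i<n \<and> f (w i) \<noteq> 0} \<noteq> {}" by auto
      define i where "i = Max {i. i<n \<and> f (w i) \<noteq> 0}"
      have fin: "finite {i. i<n \<and> f (w i) \<noteq> 0}" by simp
      have i: "i < n" "f (w i) \<noteq> 0" using Max_in[OF fin ne] unfolding i_def by auto
      have gt: "f (w i') = 0" if "i < i'" "i' < n" for i'
      proof (rule ccontr)
        assume "f (w i') \<noteq> 0"
        then have "i' \<le> i" using Max_ge[OF fin, of i'] that unfolding i_def by auto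
        with that show False by simp
      qed
      obtain h where h: "\<forall>j<i. (\<Sum>l<d. h l * w j l) = 0" "(\<Sum>l<d. h l * w i l) \<noteq> 0"
        using H[OF i(1)] by blast
      have "0 = (\<Sum>l<d. h l * (\<Sum>i'<n. f (w i') * w i' l))" using pt by simp
      also have "\<dots> = (\<Sum>i'<n. f (w i') * (\<Sum>l<d. h l * w i' l))"
        by (simp add: sum_distrib_left sum.swap[of _ "{..<d}"] mult.left_commute)
      also have "\<dots> = f (w i) * (\<Sum>l<d. h l * w i l)"
      proof -
        have "(\<Sum>i'<n. f (w i') * (\<Sum>l<d. h l * w i' l)) = f (w i) * (\<Sum>l<d. h l * w i l)
           + (\<Sum>i'\<in>{..<n}-{i}. f (w i') * (\<Sum>l<d. h l * w i' l))"
          using i(1) by (simp add: sum.remove)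
        also have "(\<Sum>i'\<in>{..<n}-{i}. f (w i') * (\<Sum>l<d. h l * w i' l)) = 0"
        proof (rule sum.neutral, rule ballI)
          fix i' assume "i' \<in> {..<n}-{i}"
          then consider "i' < i" | "i < i'" "i' < n" by force
          then show "f (w i') * (\<Sum>l<d. h l * w i' l) = 0"
            by cases (use h(1) gt in auto)
        qed
        finally show ?thesis by simp
      qed
      finally show False using i(2) h(2) by simp
    qed
    then show "f x = 0" using x by auto
  qed
  have "card (w ` {..<n}) \<le> card (V ` {..<K})"
    using FV.independent_span_bound[OF _ ind] S by auto
  also have "\<dots> \<le> K" using card_image_le[of "{..<K}" V] by simp
  finally show ?thesis using card_image[OF inj] by simp
qed
fun key :: "'a color \<Rightarrow> (nat \<times> 'a) option" where
  "key (DOT c) = None" | "key (ZERO k a) = Some (k,a)" | "key (UP k a) = Some (k,a)" | "key (DOWN k a) = Some (k,a)"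

lemma dotp_comm: "length x = length y \<Longrightarrow> dotp x y = dotp y (x::'a::field list)"
  unfolding dotp_def by (simp add: mult.commute)

lemma first_diff_comm: "first_diff x y = first_diff y x"
  unfolding first_diff_def by (metis)

lemma first_diff_prop:
  assumes "length x = d" "length y = d" "x \<noteq> y"
  shows "first_diff x y < d \<and> x ! first_diff x y \<noteq> y ! first_diff x y"
proof -
  obtain l where l: "l < d" "x ! l \<noteq> y ! l" using assms nth_equalityI by metis
  have "x ! first_diff x y \<noteq> y ! first_diff x y"
    unfolding first_diff_def by (rule LeastI[of _ l]) (use l in auto)
  moreover have "first_diff x y \<le> l"
    unfolding first_diff_def by (rule Least_le) (use l in auto)
  ultimately show ?thesis using l by simp
qed

lemma phi_DOT:
  assumes "length x = length (y::'a::field list)" "phi R x y = DOT c"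
  shows "c = dotp x y \<and> c \<noteq> dotp x x \<and> c \<noteq> dotp y y"
  using assms dotp_comm[OF assms(1)]
  unfolding phi_def phi_ord_def Let_def by (auto split: if_splits)

lemma phi_key:
  assumes "key (phi R x y) = Some (k, a)"
  shows "k = first_diff x y \<and> a = x ! k + y ! k"
  using assms first_diff_comm[of x y]
  unfolding phi_def phi_ord_def Let_def by (auto split: if_splits simp: add.commute)

lemma key_cases: "(\<exists>c. col = DOT c) \<or> (\<exists>k a. key col = Some (k, a))"
  by (cases col) auto

lemma main:
  fixes R :: "'a::field rel"
  assumes fs: "falling_star R s" and sn: "set s \<subseteq> nzvecs d"
    and ad: "affine_subspace_dim d k A" and sA: "set s \<subseteq> A"
    and t: "length s = t" "t \<ge> 1"
  shows "t - 1 \<le> k"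
proof -
  obtain p vs where pv: "length p = d" "length vs = k" "A = affine_span_of d p vs"
    using ad unfolding affine_subspace_dim_def by blast
  obtain \<alpha> where dist: "distinct s" and al: "\<forall>i<length s. \<forall>j<i. phi R (s ! i) (s ! j) = \<alpha> i"
    using fs unfolding falling_star_def by blast
  have len: "length (s ! i) = d" if "i < t" for i
  proof -
    have "s ! i \<in> set s" using that t by simp
    then show ?thesis using sn unfolding nzvecs_def by auto
  qed
  have neq: "s ! i \<noteq> s ! j" if "i < t" "j < t" "i \<noteq> j" for i j
    using dist that t nth_eq_iff_index_eq by metis
  define w where "w = (\<lambda>i l. if l < d then s ! (i+1) ! l - s ! 0 ! l else (0::'a))"
  define V where "V = (\<lambda>j l. if l < d then vs ! j ! l else (0::'a))"
  have coef: "\<exists>c. \<forall>l<d. s ! i ! l = p ! l + (\<Sum>j<k. c j * vs ! j ! l)" if "i < t" for i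
  proof -
    have "s ! i \<in> A" using sA that t by auto
    then obtain c where "s ! i = map (\<lambda>l. p ! l + (\<Sum>j<length vs. c j * vs ! j ! l)) [0..<d]"
      using pv unfolding affine_span_of_def by blast
    then show ?thesis using pv by auto
  qed
  have S: "w i \<in> FV.span (V ` {..<k})" if hi: "i < t - 1" for i
  proof -
    obtain c1 where c1: "\<forall>l<d. s ! (i+1) ! l = p ! l + (\<Sum>j<k. c1 j * vs ! j ! l)"
      using coef[of "i+1"] hi by (meson less_diff_conv)
    obtain c0 where c0: "\<forall>l<d. s ! 0 ! l = p ! l + (\<Sum>j<k. c0 j * vs ! j ! l)"
      using coef[of 0] t by auto
    have "w i = (\<Sum>j\<in>{..<k}. (\<lambda>l. (c1 j - c0 j) * V j l))"
    proof (rule ext)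
      fix l
      show "w i l = (\<Sum>j\<in>{..<k}. (\<lambda>l. (c1 j - c0 j) * V j l)) l"
      proof (cases "l < d")
        case True
        have "w i l = (\<Sum>j<k. c1 j * vs ! j ! l) - (\<Sum>j<k. c0 j * vs ! j ! l)"
          using c1 c0 True unfolding w_def by simp
        also have "\<dots> = (\<Sum>j<k. (c1 j - c0 j) * vs ! j ! l)"
          by (simp add: sum_subtractf[symmetric] left_diff_distrib)
        finally show ?thesis using True by (simp add: sum_fun_apply' V_def)
      next
        case False
        then show ?thesis by (simp add: sum_fun_apply' V_def w_def)
      qed
    qed
    also have "\<dots> \<in> FV.span (V ` {..<k})"
      by (intro FV.span_sum FV.span_scale FV.span_base) auto
    finally show ?thesis .
  qed
  have H: "\<exists>h. (\<forall>j<i. (\<Sum>l<d. h l * w j l) = 0) \<and> (\<Sum>l<d. h l * w i l) \<noteq> 0"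
    if i: "i < t - 1" for i
  proof -
    define I where "I = i + 1"
    have I: "I < t" "0 < I" using i unfolding I_def by auto
    have phiI: "phi R (s ! I) (s ! j) = \<alpha> I" if "j < I" for j
      using al[rule_format, of I j] I(1) t(1) that by simp
    consider c where "\<alpha> I = DOT c" | kk a where "key (\<alpha> I) = Some (kk, a)"
      using key_cases[of "\<alpha> I"] by blast
    then show ?thesis
    proof cases
      case 1
      have dp: "dotp (s ! I) (s ! j) = c" if "j < I" for j
        using phi_DOT[of "s ! I" "s ! j" R c] phiI[OF that] 1 len I that by auto
      have dpI: "c \<noteq> dotp (s ! I) (s ! I)"
        using phi_DOT[of "s ! I" "s ! 0" R c] phiI[of 0] 1 len I by auto
      have eq: "(\<Sum>l<d. s ! I ! l * w j l) = dotp (s ! I) (s ! (j+1)) - dotp (s ! I) (s ! 0)"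
        if "j < t - 1" for j
        using len[of I] I unfolding dotp_def w_def by (simp add: algebra_simps sum_subtractf)
      show ?thesis
      proof (intro exI conjI allI impI)
        fix j assume ji: "j < i"
        have "j + 1 < I" "j < t - 1" using ji i unfolding I_def by auto
        then show "(\<Sum>l<d. s ! I ! l * w j l) = 0"
          using eq[of j] dp[of "j+1"] dp[of 0] I(2) by simp
      next
        show "(\<Sum>l<d. s ! I ! l * w i l) \<noteq> 0"
          using eq[of i] dp[of 0] dpI i I(2) unfolding I_def by simp
      qed
    next
      case 2
      have kj: "kk = first_diff (s ! I) (s ! j) \<and> a = s ! I ! kk + s ! j ! kk" if "j < I" for j
        using phi_key[of R "s ! I" "s ! j" kk a] phiI[OF that] 2 by auto
      have kd: "kk < d" "s ! I ! kk \<noteq> s ! 0 ! kk"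
        using kj[of 0] I first_diff_prop[of "s ! I" d "s ! 0"] len[of I] len[of 0] neq[of I 0] by auto
      have sj: "s ! j ! kk = a - s ! I ! kk" if "j < I" for j
        using kj[OF that] by (simp add: algebra_simps)
      have eq: "(\<Sum>l<d. (if l = kk then 1 else 0) * w j l) = w j kk" for j
      proof -
        have "(\<Sum>l<d. (if l = kk then 1 else 0) * w j l) = (\<Sum>l<d. if kk = l then w j l else 0)"
          by (rule sum.cong) auto
        also have "\<dots> = w j kk" using kd by simp
        finally show ?thesis .
      qed
      show ?thesis
      proof (intro exI[of _ "\<lambda>l. if l = kk then 1 else 0"] conjI allI impI)
        fix j assume "j < i"
        then show "(\<Sum>l<d. (if l = kk then 1 else 0) * w j l) = 0"
          using eq[of j] sj[of "j+1"] sj[of 0] kd I unfolding I_def w_def by auto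
      next
        show "(\<Sum>l<d. (if l = kk then 1 else 0) * w i l) \<noteq> 0"
          using eq[of i] kd I unfolding I_def w_def by auto
      qed
    qed
  qed
  show ?thesis using core[where n="t - 1" and K=k and d=d and w=w and V=V, OF H S] .
qed

lemma full_space:
  "affine_subspace_dim d d {x::'a::field list. length x = d}"
proof -
  define vs :: "'a list list" where "vs = map (\<lambda>j. map (\<lambda>i. if i = j then 1 else 0) [0..<d]) [0..<d]"
  have vsn: "vs ! j ! i = (if i = j then 1 else 0)" if "i < d" "j < d" for i j
    using that unfolding vs_def by simp
  have sumc: "(\<Sum>j<d. c j * vs ! j ! i) = c i" if "i < d" for c i
  proof -
    have "(\<Sum>j<d. c j * vs ! j ! i) = (\<Sum>j<d. if i = j then c j else 0)"
      by (rule sum.cong) (use vsn that in auto)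
    also have "\<dots> = c i" using that by simp
    finally show ?thesis .
  qed
  have lvs: "length vs = d" unfolding vs_def by simp
  have li: "lin_indep d vs"
    unfolding lin_indep_def using sumc by (simp add: vs_def)
  have sp: "affine_span_of d (replicate d 0) vs = {x. length x = d}"
  proof
    show "affine_span_of d (replicate d 0) vs \<subseteq> {x. length x = d}"
      unfolding affine_span_of_def by auto
  next
    show "{x. length x = d} \<subseteq> affine_span_of d (replicate d 0) vs"
    proof
      fix x :: "'a list" assume "x \<in> {x. length x = d}"
      then have lx: "length x = d" by simp
      have "x = map (\<lambda>i. replicate d 0 ! i + (\<Sum>j<length vs. (\<lambda>j. x ! j) j * vs ! j ! i)) [0..<d]"
        by (rule nth_equalityI) (use lx sumc[of _ "\<lambda>j. x ! j"] lvs in simp_all)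
      then show "x \<in> affine_span_of d (replicate d 0) vs"
        unfolding affine_span_of_def by blast
    qed
  qed
  show ?thesis unfolding affine_subspace_dim_def
    by (rule exI[of _ "replicate d 0"], rule exI[of _ vs]) (use li sp in \<open>auto simp: vs_def\<close>)
qed

theorem lemma3p9:
  fixes R :: "'a::{field,finite} rel" and d :: nat
  assumes "odd (card (UNIV :: 'a set))"
    and "d > 0"
    and "linear_order_on (UNIV - {0}) R"
  shows "(\<forall>t\<ge>2. \<forall>A s. affine_subspace_dim d (t - 2) A \<longrightarrow>
            falling_star R s \<longrightarrow> length s = t \<longrightarrow> set s \<subseteq> nzvecs d \<longrightarrow>
            \<not> set s \<subseteq> A)
       \<and> (\<forall>S. finite S \<longrightarrow> S \<noteq> {} \<longrightarrow> S \<subseteq> nzvecs d \<longrightarrow> FS R S - 1 \<le> af d S)"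
proof (intro conjI allI impI)
  fix t :: nat and A :: "'a list set" and s :: "'a list list"
  assume "2 \<le> t" "affine_subspace_dim d (t - 2) A" "falling_star R s" "length s = t"
    "set s \<subseteq> nzvecs d"
  then show "\<not> set s \<subseteq> A" using main[of R s d "t - 2" A t] by auto
next
  fix S :: "'a list set"
  assume fin: "finite S" and ne: "S \<noteq> {}" and Sn: "S \<subseteq> nzvecs d"
  define T where "T = {t. \<exists>s. falling_star R s \<and> set s \<subseteq> S \<and> length s = t}"
  have "T \<subseteq> {..card S}"
  proof
    fix t assume "t \<in> T"
    then obtain s where "falling_star R s" "set s \<subseteq> S" "length s = t" unfolding T_def by blast
    then have "distinct s" "card (set s) \<le> card S" using card_mono[OF fin] unfolding falling_star_def by auto
    then show "t \<in> {..card S}" using \<open>length s = t\<close> distinct_card by fastforce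
  qed
  then have finT: "finite T" using finite_subset by blast
  have "0 \<in> T" unfolding T_def falling_star_def by (rule CollectI, rule exI[of _ "[]"]) auto
  then have "Max T \<in> T" using finT Max_in by blast
  then obtain s where s: "falling_star R s" "set s \<subseteq> S" "length s = FS R S"
    unfolding T_def FS_def by blast
  have ex: "\<exists>A. affine_subspace_dim d d A \<and> S \<subseteq> A"
    using full_space[of d] Sn unfolding nzvecs_def by blast
  obtain A where A: "affine_subspace_dim d (af d S) A" "S \<subseteq> A"
    using LeastI_ex[of "\<lambda>k. \<exists>A. affine_subspace_dim d k A \<and> S \<subseteq> A"] ex
    unfolding af_def by blast
  show "FS R S - 1 \<le> af d S"
  proof (cases "FS R S = 0")
    case True then show ?thesis by simp
  next
    case False
    then show ?thesis
      using main[OF s(1) _ A(1) _ s(3)] s(2) Sn A(2) by auto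
  qed
qed

end
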